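(* Let $\gamma\in[1,\infty)$, $\alpha\in(\tfrac14,1]$, $s\in\mathbb{R}$, and $\Gamma(x,t)=x-t^\alpha$ for $t\in[0,1]$. Suppose there is a constant $C$ such that for all Schwartz functions $f$ on $\mathbb{R}$, $$\Big\|\sup_{t\in[0,1]}|P_\gamma f(\Gamma(x,t),t)|\Big\|_{L^2([-1,1])}\le C\|f\|_{H^s}.$$ Then $s\ge\tfrac12(1-\tfrac1\gamma)$ if $\gamma\in[\max\{\tfrac1{2\alpha},1\},2)$, and $s\ge\tfrac14$ if $\gamma\in[2,\infty)$.
   Context: For $\gamma>0$ and $t\in[0,1]$, $$P_\gamma f(\Gamma(x,t),t)=\frac1{2\pi}\int_{\mathbb{R}}e^{i(\Gamma(x,t)\xi+t|\xi|^2)}e^{-t^\gamma|\xi|^2}\hat f(\xi)\,d\xi,$$ where $\hat f(\xi)=\int e^{-ix\xi}f(x)\,dx$, and $\|f\|_{H^s}=\|(1+|\xi|^2)^{s/2}\hat f\|_{L^2}$. *)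

theory Defs
  imports "HOL-Analysis.Analysis"
begin

definition schwartz :: "(real \<Rightarrow> complex) \<Rightarrow> bool" where
  "schwartz f \<longleftrightarrow>
     (\<exists>D :: nat \<Rightarrow> real \<Rightarrow> complex.
        D 0 = f \<and>
        (\<forall>n x. (D n has_vector_derivative D (Suc n) x) (at x)) \<and>
        (\<forall>m n. \<exists>B. \<forall>x. norm ((x ^ m) *\<^sub>R D n x) \<le> B))"

definition fourier :: "(real \<Rightarrow> complex) \<Rightarrow> real \<Rightarrow> complex" where
  "fourier f \<xi> = (\<integral>x. exp (- \<i> * complex_of_real (x * \<xi>)) * f x \<partial>lborel)"

definition P_op :: "real \<Rightarrow> (real \<Rightarrow> complex) \<Rightarrow> real \<Rightarrow> real \<Rightarrow> complex" where
  "P_op \<gamma> f y t = complex_of_real (1 / (2 * pi)) *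
     (\<integral>\<xi>. exp (\<i> * complex_of_real (y * \<xi> + t * \<xi>\<^sup>2))
           * complex_of_real (exp (- (t powr \<gamma>) * \<xi>\<^sup>2)) * fourier f \<xi> \<partial>lborel)"

definition Hs_norm :: "real \<Rightarrow> (real \<Rightarrow> complex) \<Rightarrow> real" where
  "Hs_norm s f = sqrt (\<integral>\<xi>. (1 + \<xi>\<^sup>2) powr s * (cmod (fourier f \<xi>))\<^sup>2 \<partial>lborel)"

definition enn_sqrt :: "ennreal \<Rightarrow> ennreal" where
  "enn_sqrt a = (if a = \<infinity> then \<infinity> else ennreal (sqrt (enn2real a)))"

definition maximal_L2 :: "real \<Rightarrow> real \<Rightarrow> (real \<Rightarrow> complex) \<Rightarrow> ennreal" where
  "maximal_L2 \<gamma> \<alpha> f = enn_sqrt (\<integral>\<^sup>+ x\<in>{-1..1}.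
      (SUP t\<in>{0..1}. ennreal (cmod (P_op \<gamma> f (x - t powr \<alpha>) t))) ^ 2 \<partial>lborel)"

end

theory Submission
  imports Defs "HOL-Probability.Probability" "HOL-Computational_Algebra.Polynomial"
begin



lemma gauss_mom_even:
  fixes \<sigma> :: real assumes "0 < \<sigma>"
  shows "has_bochner_integral lborel (\<lambda>x. exp (-x\<^sup>2/(2*\<sigma>\<^sup>2)) * x^(2*k))
          (sqrt(2*pi*\<sigma>\<^sup>2) * (fact (2*k) / ((2/\<sigma>\<^sup>2)^k * fact k)))"
proof -
  have "has_bochner_integral lborel (\<lambda>x. normal_density 0 \<sigma> x * (x - 0)^(2*k) * sqrt(2*pi*\<sigma>\<^sup>2))
          ((fact (2*k) / ((2/\<sigma>\<^sup>2)^k * fact k)) * sqrt(2*pi*\<sigma>\<^sup>2))"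
    by (intro has_bochner_integral_mult_left normal_moment_even assms)
  moreover have "(\<lambda>x. normal_density 0 \<sigma> x * (x - 0)^(2*k) * sqrt(2*pi*\<sigma>\<^sup>2)) = (\<lambda>x. exp (-x\<^sup>2/(2*\<sigma>\<^sup>2)) * x^(2*k))"
    using assms by (auto simp: normal_density_def fun_eq_iff)
  ultimately show ?thesis by (simp add: mult.commute)
qed

lemma gauss_mom_odd:
  fixes \<sigma> :: real assumes "0 < \<sigma>"
  shows "has_bochner_integral lborel (\<lambda>x. exp (-x\<^sup>2/(2*\<sigma>\<^sup>2)) * x^(2*k+1)) 0"
proof -
  have "has_bochner_integral lborel (\<lambda>x. normal_density 0 \<sigma> x * (x - 0)^(2*k+1) * sqrt(2*pi*\<sigma>\<^sup>2))
          (0 * sqrt(2*pi*\<sigma>\<^sup>2))"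
    by (intro has_bochner_integral_mult_left normal_moment_odd assms)
  moreover have "(\<lambda>x. normal_density 0 \<sigma> x * (x - 0)^(2*k+1) * sqrt(2*pi*\<sigma>\<^sup>2)) = (\<lambda>x. exp (-x\<^sup>2/(2*\<sigma>\<^sup>2)) * x^(2*k+1))"
    using assms by (auto simp: normal_density_def fun_eq_iff)
  ultimately show ?thesis by simp
qed




definition gw :: "real \<Rightarrow> real \<Rightarrow> real \<Rightarrow> complex" where
  "gw \<sigma> N x = complex_of_real (\<sigma> / sqrt(2*pi) * exp(-(\<sigma>\<^sup>2*x\<^sup>2)/2)) * exp(-\<i> * complex_of_real (N*x))"

lemma char_std_int:
  "(\<integral>u. std_normal_density u *\<^sub>R iexp (\<theta> * u) \<partial>lborel) = complex_of_real (exp (- (\<theta>^2) / 2))"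
proof -
  have "char std_normal_distribution \<theta> = complex_of_real (exp (- (\<theta>^2) / 2))"
    by (simp add: char_std_normal_distribution)
  then show ?thesis unfolding char_def
    by (subst (asm) integral_density) auto
qed

lemma fourier_gw:
  fixes \<sigma> N \<xi> :: real
  assumes "0 < \<sigma>"
  shows "fourier (gw \<sigma> N) \<xi> = complex_of_real (exp (-(\<xi>+N)\<^sup>2/(2*\<sigma>\<^sup>2)))"
proof -
  let ?h = "\<lambda>x. exp (- \<i> * complex_of_real (x * \<xi>)) * gw \<sigma> N x"
  have "fourier (gw \<sigma> N) \<xi> = \<bar>1/\<sigma>\<bar> *\<^sub>R (\<integral>u. ?h (0 + (1/\<sigma>) * u) \<partial>lborel)"
    unfolding fourier_def using assms by (intro lborel_integral_real_affine) simp
  also have "(\<lambda>u. ?h (0 + (1/\<sigma>) * u)) = (\<lambda>u. \<sigma> *\<^sub>R (std_normal_density u *\<^sub>R iexp ((-(\<xi>+N)/\<sigma>) * u)))"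
  proof
    fix u
    have e: "exp(-(\<sigma>\<^sup>2*(u/\<sigma>)\<^sup>2)/2) = exp (-u\<^sup>2/2)" using assms by (simp add: power_divide)
    have "?h (0 + (1/\<sigma>) * u) = complex_of_real (\<sigma> / sqrt(2*pi) * exp (-u\<^sup>2/2)) *
        (exp (- \<i> * complex_of_real (u/\<sigma> * \<xi>)) * exp(-\<i> * complex_of_real (N*(u/\<sigma>))))"
      unfolding gw_def using e by simp
    also have "exp (- \<i> * complex_of_real (u/\<sigma> * \<xi>)) * exp(-\<i> * complex_of_real (N*(u/\<sigma>)))
       = iexp ((-(\<xi>+N)/\<sigma>) * u)"
      by (simp add: exp_add[symmetric] algebra_simps diff_divide_distrib)
    finally show "?h (0 + (1/\<sigma>) * u) = \<sigma> *\<^sub>R (std_normal_density u *\<^sub>R iexp ((-(\<xi>+N)/\<sigma>) * u))"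
      by (simp add: std_normal_density_def scaleR_conv_of_real)
  qed
  also have "\<bar>1/\<sigma>\<bar> *\<^sub>R (\<integral>u. \<sigma> *\<^sub>R (std_normal_density u *\<^sub>R iexp ((-(\<xi>+N)/\<sigma>) * u)) \<partial>lborel)
     = complex_of_real (exp (- ((-(\<xi>+N)/\<sigma>)^2) / 2))"
    using assms by (simp only: integral_scaleR_right char_std_int) (simp add: scaleR_conv_of_real)
  also have "exp (- ((-(\<xi>+N)/\<sigma>)^2) / 2) = exp (-(\<xi>+N)\<^sup>2/(2*\<sigma>\<^sup>2))"
  proof -
    have "(-(\<xi>+N))^2 = (\<xi>+N)^2" by (rule power2_minus)
    then show ?thesis by (simp add: power_divide mult.commute)
  qed
  finally show ?thesis .
qed




lemma pow_le_exp_fact: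
  fixes y :: real assumes "0 \<le> y"
  shows "y ^ n / fact n \<le> exp y"
proof -
  have s: "(\<lambda>k. y^k /\<^sub>R fact k) sums exp y" by (rule exp_converges)
  have "(\<Sum>k\<in>{n}. y^k /\<^sub>R fact k) \<le> exp y"
    using sum_le_suminf[OF sums_summable[OF s], of "{n}"] s assms
    by (auto simp: sums_iff)
  then show ?thesis by (simp add: divide_inverse_commute)
qed

lemma abs_pow_gauss_le:
  fixes a x :: real assumes "0 < a"
  shows "\<bar>x\<bar>^j * exp (-(a*x\<^sup>2)) \<le> 1 + fact j / a^j"
proof (cases "\<bar>x\<bar> \<le> 1")
  case True
  have "\<bar>x\<bar>^j \<le> 1" using True by (simp add: power_le_one)
  moreover have "exp (-(a*x\<^sup>2)) \<le> 1" using assms by simp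
  ultimately have "\<bar>x\<bar>^j * exp (-(a*x\<^sup>2)) \<le> 1 * 1"
    by (intro mult_mono) auto
  then show ?thesis by (smt (verit) divide_nonneg_pos fact_gt_zero zero_less_power assms)
next
  case False
  have "\<bar>x\<bar>^j \<le> \<bar>x\<bar>^(2*j)" using False by (intro power_increasing) auto
  also have "\<bar>x\<bar>^(2*j) = (x\<^sup>2)^j" by (simp add: power_mult power2_abs)
  also have "(x\<^sup>2)^j = (a*x\<^sup>2)^j / a^j" using assms by (simp add: power_mult_distrib)
  finally have 1: "\<bar>x\<bar>^j \<le> (a*x\<^sup>2)^j / a^j" .
  have 2: "(a*x\<^sup>2)^j \<le> fact j * exp (a*x\<^sup>2)"
    using pow_le_exp_fact[of "a*x\<^sup>2" j] assms by (simp add: field_simps)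
  have "\<bar>x\<bar>^j * exp (-(a*x\<^sup>2)) \<le> (a*x\<^sup>2)^j / a^j * exp (-(a*x\<^sup>2))"
    using 1 by (intro mult_right_mono) auto
  also have "\<dots> \<le> fact j * exp (a*x\<^sup>2) / a^j * exp (-(a*x\<^sup>2))"
    using 2 assms by (intro mult_right_mono divide_right_mono) auto
  also have "\<dots> = fact j / a^j" by (simp add: exp_minus field_simps)
  finally show ?thesis by simp
qed

fun Pn :: "real \<Rightarrow> real \<Rightarrow> complex \<Rightarrow> nat \<Rightarrow> complex poly" where
  "Pn a b c 0 = [:c:]"
| "Pn a b c (Suc n) = pderiv (Pn a b c n) + Pn a b c n * [: \<i> * of_real b, - 2 * of_real a :]"

definition Phi :: "real \<Rightarrow> real \<Rightarrow> complex \<Rightarrow> complex" where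
  "Phi a b z = exp (-(of_real a) * z\<^sup>2 + \<i> * of_real b * z)"

lemma Phi_deriv: "(Phi a b has_field_derivative (Phi a b z * (-2 * of_real a * z + \<i> * of_real b))) (at z)"
  unfolding Phi_def
  by (auto intro!: derivative_eq_intros simp: algebra_simps)

lemma polyPhi_deriv:
  "((\<lambda>z. poly p z * Phi a b z) has_field_derivative
     (poly (pderiv p + p * [: \<i> * of_real b, - 2 * of_real a :]) z * Phi a b z)) (at z)"
proof -
  note d = DERIV_mult[OF poly_DERIV[of p z] Phi_deriv[of a b z]]
  have e: "poly (pderiv p) z * Phi a b z + Phi a b z * (-2 * of_real a * z + \<i> * of_real b) * poly p z
     = poly (pderiv p + p * [: \<i> * of_real b, - 2 * of_real a :]) z * Phi a b z"
    by (simp add: algebra_simps)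
  show ?thesis using d unfolding e .
qed

lemma norm_Phi: "norm (Phi a b (complex_of_real x)) = exp (-(a*x\<^sup>2))"
  unfolding Phi_def by (simp add: power2_eq_square)

lemma norm_poly_le: "norm (poly p (z::complex)) \<le> (\<Sum>i\<le>degree p. norm (coeff p i) * norm z ^ i)"
  unfolding poly_altdef by (rule order.trans[OF norm_sum]) (simp add: norm_mult norm_power)

lemma schwartz_gauss:
  fixes a b :: real and c :: complex
  assumes "0 < a"
  shows "schwartz (\<lambda>x. c * Phi a b (of_real x))"
  unfolding schwartz_def
proof (intro exI[of _ "\<lambda>n x. poly (Pn a b c n) (of_real x) * Phi a b (of_real x)"] conjI allI)
  show "(\<lambda>x. poly (Pn a b c 0) (complex_of_real x) * Phi a b (complex_of_real x)) = (\<lambda>x. c * Phi a b (complex_of_real x))"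
    by simp
next
  fix n x
  have "(((\<lambda>z. poly (Pn a b c n) z * Phi a b z) \<circ> complex_of_real) has_vector_derivative
      (1 * (poly (Pn a b c (Suc n)) (of_real x) * Phi a b (of_real x)))) (at x)"
  proof (rule field_vector_diff_chain_at)
    have "((\<lambda>x. complex_of_real x) has_vector_derivative complex_of_real 1) (at x)"
      by (rule has_vector_derivative_of_real) (rule DERIV_ident)
    then show "(complex_of_real has_vector_derivative 1) (at x)" by simp
    show "((\<lambda>z. poly (Pn a b c n) z * Phi a b z) has_field_derivative
        poly (Pn a b c (Suc n)) (complex_of_real x) * Phi a b (complex_of_real x)) (at (complex_of_real x))"
      using polyPhi_deriv[of "Pn a b c n" a b "of_real x"] by simp
  qed
  then show "((\<lambda>x. poly (Pn a b c n) (complex_of_real x) * Phi a b (complex_of_real x)) has_vector_derivative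
          poly (Pn a b c (Suc n)) (complex_of_real x) * Phi a b (complex_of_real x)) (at x)"
    by (simp add: o_def)
next
  fix m n
  let ?P = "Pn a b c n"
  show "\<exists>B. \<forall>x. norm ((x ^ m) *\<^sub>R (poly ?P (complex_of_real x) * Phi a b (complex_of_real x))) \<le> B"
  proof (intro exI allI)
    fix x :: real
    have "norm ((x ^ m) *\<^sub>R (poly ?P (complex_of_real x) * Phi a b (complex_of_real x)))
        = \<bar>x\<bar>^m * norm (poly ?P (complex_of_real x)) * exp (-(a*x\<^sup>2))"
      by (simp add: norm_mult norm_Phi power_abs)
    also have "\<dots> \<le> \<bar>x\<bar>^m * (\<Sum>i\<le>degree ?P. norm (coeff ?P i) * \<bar>x\<bar> ^ i) * exp (-(a*x\<^sup>2))"
      by (intro mult_right_mono mult_left_mono) (use norm_poly_le[of ?P "of_real x"] in auto)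
    also have "\<dots> = (\<Sum>i\<le>degree ?P. norm (coeff ?P i) * (\<bar>x\<bar> ^ (m+i) * exp (-(a*x\<^sup>2))))"
      by (simp add: sum_distrib_left sum_distrib_right power_add algebra_simps)
    also have "\<dots> \<le> (\<Sum>i\<le>degree ?P. norm (coeff ?P i) * (1 + fact (m+i) / a^(m+i)))"
      by (intro sum_mono mult_left_mono abs_pow_gauss_le assms) auto
    finally show "norm ((x ^ m) *\<^sub>R (poly ?P (complex_of_real x) * Phi a b (complex_of_real x)))
        \<le> (\<Sum>i\<le>degree ?P. norm (coeff ?P i) * (1 + fact (m+i) / a^(m+i)))" .
  qed
qed




lemma cos_ge: "1 - x\<^sup>2/2 \<le> cos (x::real)"
proof -
  have "cos x = 1 - 2 * sin (x/2) ^ 2" using cos_double_sin[of "x/2"] by simp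
  moreover have "sin (x/2) ^ 2 \<le> (x/2)^2"
    using abs_sin_x_le_abs_x[of "x/2"] by (metis abs_ge_zero power2_abs power_mono)
  ultimately show ?thesis by (simp add: power_divide)
qed

lemma exp_ge_1m: "1 - v \<le> exp (-v::real)"
  using exp_ge_add_one_self[of "-v"] by simp

lemma lower_int:
  fixes \<sigma> L t T N :: real
  assumes "0 < \<sigma>"
  shows "has_bochner_integral lborel
     (\<lambda>\<eta>. exp (-\<eta>\<^sup>2/(2*\<sigma>\<^sup>2)) * (1 - (L*\<eta> + t*\<eta>\<^sup>2)\<^sup>2/2 - T*(\<eta>-N)\<^sup>2))
     (sqrt(2*pi*\<sigma>\<^sup>2) * (1 - L\<^sup>2*\<sigma>\<^sup>2/2 - 3/2*t\<^sup>2*\<sigma>^4 - T*(\<sigma>\<^sup>2+N\<^sup>2)))"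
proof -
  let ?g = "\<lambda>\<eta>::real. exp (-\<eta>\<^sup>2/(2*\<sigma>\<^sup>2))"
  let ?m = "sqrt(2*pi*\<sigma>\<^sup>2)"
  have m0: "has_bochner_integral lborel (\<lambda>x. ?g x * x^0) (?m * 1)"
    using gauss_mom_even[OF assms, of 0] by simp
  have m2: "has_bochner_integral lborel (\<lambda>x. ?g x * x^2) (?m * \<sigma>\<^sup>2)"
    using gauss_mom_even[OF assms, of 1] by (simp add: power2_eq_square)
  have m4: "has_bochner_integral lborel (\<lambda>x. ?g x * x^4) (?m * (3*\<sigma>^4))"
  proof -
    have "fact (2*2) / ((2/\<sigma>\<^sup>2)^2 * fact 2) = (3*\<sigma>^4::real)"
      using assms by (simp add: fact_numeral power2_eq_square power4_eq_xxxx field_simps)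
    then show ?thesis using gauss_mom_even[OF assms, of 2] by simp
  qed
  have m1: "has_bochner_integral lborel (\<lambda>x. ?g x * x^1) 0"
    using gauss_mom_odd[OF assms, of 0] by simp
  have m3: "has_bochner_integral lborel (\<lambda>x. ?g x * x^3) 0"
    using gauss_mom_odd[OF assms, of 1] by (simp add: numeral_3_eq_3)
  have H: "has_bochner_integral lborel
     (\<lambda>\<eta>. (1 - T*N\<^sup>2) * (?g \<eta> * \<eta>^0) + (2*T*N) * (?g \<eta> * \<eta>^1) - (L\<^sup>2/2 + T) * (?g \<eta> * \<eta>^2)
          - (L*t) * (?g \<eta> * \<eta>^3) - (t\<^sup>2/2) * (?g \<eta> * \<eta>^4))
     ((1 - T*N\<^sup>2) * (?m * 1) + (2*T*N) * 0 - (L\<^sup>2/2 + T) * (?m * \<sigma>\<^sup>2) - (L*t) * 0 - (t\<^sup>2/2) * (?m * (3*\<sigma>^4)))"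
    by (intro has_bochner_integral_diff has_bochner_integral_add has_bochner_integral_mult_right m0 m1 m2 m3 m4)
  have e1: "(\<lambda>\<eta>. (1 - T*N\<^sup>2) * (?g \<eta> * \<eta>^0) + (2*T*N) * (?g \<eta> * \<eta>^1) - (L\<^sup>2/2 + T) * (?g \<eta> * \<eta>^2)
          - (L*t) * (?g \<eta> * \<eta>^3) - (t\<^sup>2/2) * (?g \<eta> * \<eta>^4)) =
     (\<lambda>\<eta>. exp (-\<eta>\<^sup>2/(2*\<sigma>\<^sup>2)) * (1 - (L*\<eta> + t*\<eta>\<^sup>2)\<^sup>2/2 - T*(\<eta>-N)\<^sup>2))"
    by (rule ext) (simp add: power2_eq_square power3_eq_cube power4_eq_xxxx algebra_simps)
  have e2: "(1 - T*N\<^sup>2) * (?m * 1) + (2*T*N) * 0 - (L\<^sup>2/2 + T) * (?m * \<sigma>\<^sup>2) - (L*t) * 0 - (t\<^sup>2/2) * (?m * (3*\<sigma>^4))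
     = ?m * (1 - L\<^sup>2*\<sigma>\<^sup>2/2 - 3/2*t\<^sup>2*\<sigma>^4 - T*(\<sigma>\<^sup>2+N\<^sup>2))"
    by (simp add: algebra_simps)
  show ?thesis using H unfolding e1 e2 .
qed




lemma P_lower:
  fixes \<gamma> \<sigma> N y t :: real
  assumes sp: "0 < \<sigma>" and tp: "0 \<le> t"
  shows "sqrt(2*pi*\<sigma>\<^sup>2) * (1 - (y - 2*t*N)\<^sup>2*\<sigma>\<^sup>2/2 - 3/2*t\<^sup>2*\<sigma>^4 - (t powr \<gamma>)*(\<sigma>\<^sup>2+N\<^sup>2))
         \<le> 2*pi*cmod (P_op \<gamma> (gw \<sigma> N) y t)"
proof -
  define L where "L = y - 2*t*N"
  define T where "T = t powr \<gamma>"
  have T0: "0 \<le> T" unfolding T_def by simp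
  define \<phi>0 where "\<phi>0 = t*N\<^sup>2 - y*N"
  let ?g = "\<lambda>\<eta>::real. exp (-\<eta>\<^sup>2/(2*\<sigma>\<^sup>2))"
  define w where "w = (\<lambda>\<eta>. exp (-T*(\<eta>-N)\<^sup>2) * ?g \<eta>)"
  define \<psi> where "\<psi> = (\<lambda>\<eta>. exp (\<i> * complex_of_real (L*\<eta> + t*\<eta>\<^sup>2)) * complex_of_real (w \<eta>))"
  define \<Phi> where "\<Phi> = (\<lambda>\<xi>. exp (\<i> * complex_of_real (y * \<xi> + t * \<xi>\<^sup>2))
           * complex_of_real (exp (- (t powr \<gamma>) * \<xi>\<^sup>2)) * fourier (gw \<sigma> N) \<xi>)"
  have P: "P_op \<gamma> (gw \<sigma> N) y t = complex_of_real (1 / (2 * pi)) * (\<integral>\<xi>. \<Phi> \<xi> \<partial>lborel)"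
    unfolding P_op_def \<Phi>_def ..
  have "(\<integral>\<xi>. \<Phi> \<xi> \<partial>lborel) = \<bar>1\<bar> *\<^sub>R (\<integral>\<eta>. \<Phi> (-N + 1*\<eta>) \<partial>lborel)"
    by (rule lborel_integral_real_affine) simp
  also have "(\<lambda>\<eta>. \<Phi> (-N + 1*\<eta>)) = (\<lambda>\<eta>. exp (\<i> * complex_of_real \<phi>0) * \<psi> \<eta>)"
  proof
    fix \<eta>
    have a: "y * (-N + 1*\<eta>) + t * (-N + 1*\<eta>)\<^sup>2 = \<phi>0 + (L*\<eta> + t*\<eta>\<^sup>2)"
      unfolding \<phi>0_def L_def by (simp add: power2_eq_square algebra_simps)
    have b: "(-N + 1*\<eta> + N) = \<eta>" by simp
    have c: "(-N + 1*\<eta>)\<^sup>2 = (\<eta>-N)\<^sup>2" by (simp add: power2_eq_square algebra_simps)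
    have 1: "\<Phi> (-N + 1*\<eta>) = exp (\<i> * complex_of_real (\<phi>0 + (L*\<eta> + t*\<eta>\<^sup>2)))
       * complex_of_real (exp (- T * (\<eta>-N)\<^sup>2)) * complex_of_real (?g \<eta>)"
      unfolding \<Phi>_def fourier_gw[OF sp] T_def by (simp only: a, simp only: b c)
    have 2: "exp (\<i> * complex_of_real (p + q)) = exp (\<i> * complex_of_real p) * exp (\<i> * complex_of_real q)" for p q
      by (simp only: of_real_add distrib_left exp_add)
    show "\<Phi> (-N + 1*\<eta>) = exp (\<i> * complex_of_real \<phi>0) * \<psi> \<eta>"
      unfolding 1 2 \<psi>_def w_def by (simp only: of_real_mult mult.assoc)
  qed
  also have "(\<integral>\<eta>. exp (\<i> * complex_of_real \<phi>0) * \<psi> \<eta> \<partial>lborel) = exp (\<i> * complex_of_real \<phi>0) * (\<integral>\<eta>. \<psi> \<eta> \<partial>lborel)"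
    by (rule integral_mult_right_zero)
  finally have I: "cmod (\<integral>\<xi>. \<Phi> \<xi> \<partial>lborel) = cmod (\<integral>\<eta>. \<psi> \<eta> \<partial>lborel)"
    by (simp add: norm_mult)
  have lowI: "has_bochner_integral lborel
     (\<lambda>\<eta>. ?g \<eta> * (1 - (L*\<eta> + t*\<eta>\<^sup>2)\<^sup>2/2 - T*(\<eta>-N)\<^sup>2))
     (sqrt(2*pi*\<sigma>\<^sup>2) * (1 - L\<^sup>2*\<sigma>\<^sup>2/2 - 3/2*t\<^sup>2*\<sigma>^4 - T*(\<sigma>\<^sup>2+N\<^sup>2)))"
    by (rule lower_int[OF sp])
  have gI: "integrable lborel ?g"
    using gauss_mom_even[OF sp, of 0] by (simp add: has_bochner_integral_iff)
  have w_le: "w \<eta> \<le> ?g \<eta>" for \<eta>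
    unfolding w_def using T0 by (simp add: mult_le_cancel_right1)
  have w0: "0 \<le> w \<eta>" for \<eta> unfolding w_def by simp
  have psiI: "integrable lborel \<psi>"
  proof (rule Bochner_Integration.integrable_bound[OF gI])
    show "\<psi> \<in> borel_measurable lborel" unfolding \<psi>_def w_def by measurable
    show "AE x in lborel. norm (\<psi> x) \<le> norm (?g x)"
      using w_le w0 by (simp add: \<psi>_def norm_mult)
  qed
  have Rpsi: "Re (\<psi> \<eta>) = cos (L*\<eta> + t*\<eta>\<^sup>2) * w \<eta>" for \<eta>
    unfolding \<psi>_def by (simp add: Re_exp)
  have pt: "?g \<eta> * (1 - (L*\<eta> + t*\<eta>\<^sup>2)\<^sup>2/2 - T*(\<eta>-N)\<^sup>2) \<le> Re (\<psi> \<eta>)" for \<eta>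
  proof -
    let ?u = "L*\<eta> + t*\<eta>\<^sup>2" and ?v = "T*(\<eta>-N)\<^sup>2"
    have "(1 - ?u\<^sup>2/2) * w \<eta> \<le> cos ?u * w \<eta>"
      by (intro mult_right_mono cos_ge w0)
    moreover have "(1 - ?v) * ?g \<eta> \<le> w \<eta>"
      unfolding w_def using exp_ge_1m[of ?v] by (intro mult_right_mono) auto
    moreover have "?u\<^sup>2/2 * w \<eta> \<le> ?u\<^sup>2/2 * ?g \<eta>"
      using w_le by (intro mult_left_mono) auto
    ultimately show ?thesis unfolding Rpsi by (simp add: algebra_simps)
  qed
  have "sqrt(2*pi*\<sigma>\<^sup>2) * (1 - L\<^sup>2*\<sigma>\<^sup>2/2 - 3/2*t\<^sup>2*\<sigma>^4 - T*(\<sigma>\<^sup>2+N\<^sup>2))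
      = (\<integral>\<eta>. ?g \<eta> * (1 - (L*\<eta> + t*\<eta>\<^sup>2)\<^sup>2/2 - T*(\<eta>-N)\<^sup>2) \<partial>lborel)"
    using lowI by (simp add: has_bochner_integral_iff)
  also have "\<dots> \<le> (\<integral>\<eta>. Re (\<psi> \<eta>) \<partial>lborel)"
    using lowI psiI pt by (intro integral_mono) (auto simp: has_bochner_integral_iff)
  also have "\<dots> = Re (\<integral>\<eta>. \<psi> \<eta> \<partial>lborel)"
    using psiI by simp
  also have "\<dots> \<le> cmod (\<integral>\<eta>. \<psi> \<eta> \<partial>lborel)" by (rule complex_Re_le_cmod)
  also have "\<dots> = 2*pi*cmod (P_op \<gamma> (gw \<sigma> N) y t)"
  proof -
    have "cmod (complex_of_real (1 / (2 * pi)) * (\<integral>\<xi>. \<Phi> \<xi> \<partial>lborel)) = (1/(2*pi)) * cmod (\<integral>\<xi>. \<Phi> \<xi> \<partial>lborel)"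
      by (simp only: norm_mult norm_of_real) simp
    then show ?thesis unfolding P I[symmetric] by simp
  qed
  finally show ?thesis unfolding L_def T_def .
qed




lemma lhs_bound:
  fixes a b B C s \<gamma> \<alpha> :: real and f :: "real \<Rightarrow> complex"
  assumes hyp: "maximal_L2 \<gamma> \<alpha> f \<le> ennreal (C * Hs_norm s f)"
    and ab: "-1 \<le> a" "a < b" "b \<le> 1" and B0: "0 < B"
    and pt: "\<And>x. x \<in> {a..b} \<Longrightarrow> \<exists>t\<in>{0..1}. B \<le> cmod (P_op \<gamma> f (x - t powr \<alpha>) t)"
  shows "(b-a)*B\<^sup>2 \<le> C\<^sup>2 * (\<integral>\<xi>. (1 + \<xi>\<^sup>2) powr s * (cmod (fourier f \<xi>))\<^sup>2 \<partial>lborel)"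
proof -
  define J where "J = (\<integral>\<xi>. (1 + \<xi>\<^sup>2) powr s * (cmod (fourier f \<xi>))\<^sup>2 \<partial>lborel)"
  have J0: "0 \<le> J" unfolding J_def by (rule integral_nonneg_AE) auto
  have HJ: "Hs_norm s f = sqrt J" unfolding Hs_norm_def J_def ..
  define S where "S = (\<lambda>x. (SUP t\<in>{0..1}. ennreal (cmod (P_op \<gamma> f (x - t powr \<alpha>) t))))"
  define I where "I = (\<integral>\<^sup>+ x\<in>{-1..1}. (S x) ^ 2 \<partial>lborel)"
  have hML: "maximal_L2 \<gamma> \<alpha> f = enn_sqrt I" unfolding maximal_L2_def I_def S_def ..
  have low: "ennreal ((b-a)*B\<^sup>2) \<le> I"
  proof -
    have "ennreal ((b-a)*B\<^sup>2) = ennreal (B\<^sup>2) * emeasure lborel {a..b}"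
      using ab by (simp add: ennreal_mult' mult.commute)
    also have "\<dots> = (\<integral>\<^sup>+ x. ennreal (B\<^sup>2) * indicator {a..b} x \<partial>lborel)"
      by (simp add: nn_integral_cmult_indicator)
    also have "\<dots> \<le> I" unfolding I_def
    proof (intro nn_integral_mono)
      fix x
      show "ennreal (B\<^sup>2) * indicator {a..b} x \<le> (S x)^2 * indicator {-1..1} x"
      proof (cases "x \<in> {a..b}")
        case True
        then obtain t where t: "t \<in> {0..1}" "B \<le> cmod (P_op \<gamma> f (x - t powr \<alpha>) t)" using pt by blast
        have "ennreal B \<le> S x" unfolding S_def
          using t by (intro SUP_upper2[OF t(1)]) (simp add: ennreal_leI)
        then have "ennreal B ^ 2 \<le> (S x)^2" by (rule power_mono) simp
        moreover have "x \<in> {-1..1}" using True ab by auto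
        ultimately show ?thesis using True B0 by (simp add: ennreal_power)
      qed simp
    qed
    finally show ?thesis .
  qed
  have Ifin: "I \<noteq> \<infinity>"
  proof
    assume "I = \<infinity>"
    then have "maximal_L2 \<gamma> \<alpha> f = \<infinity>" unfolding hML enn_sqrt_def by simp
    then show False using hyp by (simp add: top_unique)
  qed
  define r where "r = enn2real I"
  have Ir: "I = ennreal r" unfolding r_def using Ifin by (simp add: ennreal_enn2real_if)
  have r0: "0 \<le> r" unfolding r_def by simp
  have lowr: "(b-a)*B\<^sup>2 \<le> r" using low Ir r0 by (simp add: ennreal_le_iff)
  have pos: "0 < (b-a)*B\<^sup>2" using ab B0 by simp
  have h2: "ennreal (sqrt r) \<le> ennreal (C * sqrt J)"
    using hyp unfolding hML HJ enn_sqrt_def using Ifin r_def by simp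
  have CJ: "0 \<le> C * sqrt J"
  proof (rule ccontr)
    assume "\<not> 0 \<le> C * sqrt J"
    then have "ennreal (sqrt r) \<le> 0" using h2 by (simp add: ennreal_neg)
    then have "sqrt r \<le> 0" using ennreal_le_iff2 by fastforce
    then have "r \<le> 0" using r0 by simp
    then show False using lowr pos by simp
  qed
  have "sqrt r \<le> C * sqrt J" using h2 CJ by (simp add: ennreal_le_iff)
  then have "(sqrt r)\<^sup>2 \<le> (C * sqrt J)\<^sup>2" using r0 by (intro power_mono) auto
  then have "r \<le> C\<^sup>2 * J" using r0 J0 by (simp add: power_mult_distrib)
  then show ?thesis using lowr unfolding J_def by simp
qed




lemma J_shift:
  fixes \<sigma> N s :: real assumes sp: "0 < \<sigma>"
  shows "(\<integral>\<xi>. (1 + \<xi>\<^sup>2) powr s * (cmod (fourier (gw \<sigma> N) \<xi>))\<^sup>2 \<partial>lborel)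
       = (\<integral>\<eta>. (1 + (\<eta>-N)\<^sup>2) powr s * exp (-\<eta>\<^sup>2/(2*(\<sigma>/sqrt 2)\<^sup>2)) \<partial>lborel)"
proof -
  let ?h = "\<lambda>\<xi>. (1 + \<xi>\<^sup>2) powr s * (cmod (fourier (gw \<sigma> N) \<xi>))\<^sup>2"
  have "(\<integral>\<xi>. ?h \<xi> \<partial>lborel) = \<bar>1\<bar> *\<^sub>R (\<integral>\<eta>. ?h (-N + 1*\<eta>) \<partial>lborel)"
    by (rule lborel_integral_real_affine) simp
  also have "(\<lambda>\<eta>. ?h (-N + 1*\<eta>)) = (\<lambda>\<eta>. (1 + (\<eta>-N)\<^sup>2) powr s * exp (-\<eta>\<^sup>2/(2*(\<sigma>/sqrt 2)\<^sup>2)))"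
  proof
    fix \<eta>
    have c: "(-N + 1*\<eta>)\<^sup>2 = (\<eta>-N)\<^sup>2" by (simp add: power2_eq_square algebra_simps)
    have e: "(exp (-\<eta>\<^sup>2/(2*\<sigma>\<^sup>2)))\<^sup>2 = exp (-\<eta>\<^sup>2/(2*(\<sigma>/sqrt 2)\<^sup>2))"
      unfolding power2_eq_square[of "exp _"] exp_add[symmetric]
      by (simp add: power_divide field_simps)
    have b: "-N + 1*\<eta> + N = \<eta>" by simp
    have e2: "(cmod (complex_of_real (exp (-(-N + 1*\<eta> + N)\<^sup>2/(2*\<sigma>\<^sup>2)))))\<^sup>2 = exp (-\<eta>\<^sup>2/(2*(\<sigma>/sqrt 2)\<^sup>2))"
      unfolding b norm_of_real abs_of_nonneg[OF exp_ge_zero] e ..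
    show "?h (-N + 1*\<eta>) = (1 + (\<eta>-N)\<^sup>2) powr s * exp (-\<eta>\<^sup>2/(2*(\<sigma>/sqrt 2)\<^sup>2))"
      unfolding fourier_gw[OF sp] e2 c ..
  qed
  finally show ?thesis by simp
qed

lemma powr_le_1plus: fixes u s :: real assumes "0 \<le> u" "0 \<le> s" "s \<le> 1"
  shows "u powr s \<le> 1 + u"
proof (cases "u \<le> 1")
  case True
  then have "u powr s \<le> 1 powr s" using assms by (intro powr_mono2) auto
  then show ?thesis using assms by simp
next
  case False
  then have "u powr s \<le> u powr 1" using assms by (intro powr_mono) auto
  then show ?thesis using False by simp
qed

lemma J_bound_pos:
  fixes \<sigma> N s :: real assumes sp: "0 < \<sigma>" and N1: "1 \<le> N" and sN: "\<sigma>\<^sup>2 \<le> 2*N\<^sup>2"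
    and s0: "0 \<le> s" and s1: "s \<le> 1"
  shows "(\<integral>\<xi>. (1 + \<xi>\<^sup>2) powr s * (cmod (fourier (gw \<sigma> N) \<xi>))\<^sup>2 \<partial>lborel)
       \<le> 18 * \<sigma> * sqrt pi * (N\<^sup>2) powr s"
proof -
  define \<tau> where "\<tau> = \<sigma> / sqrt 2"
  have tp: "0 < \<tau>" unfolding \<tau>_def using sp by simp
  have t2: "\<tau>\<^sup>2 = \<sigma>\<^sup>2/2" unfolding \<tau>_def by (simp add: power_divide)
  let ?g = "\<lambda>\<eta>::real. exp (-\<eta>\<^sup>2/(2*\<tau>\<^sup>2))"
  let ?m = "sqrt(2*pi*\<tau>\<^sup>2)"
  have m: "?m = \<sigma> * sqrt pi"
  proof -
    have "2*pi*\<tau>\<^sup>2 = pi * \<sigma>\<^sup>2" unfolding t2 by simp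
    then have "?m = sqrt (pi * \<sigma>\<^sup>2)" by (rule arg_cong[where f=sqrt])
    also have "\<dots> = sqrt pi * sqrt (\<sigma>\<^sup>2)" by (rule real_sqrt_mult)
    finally have "?m = sqrt pi * sqrt (\<sigma>\<^sup>2)" .
    then show ?thesis using sp by simp
  qed
  have m0: "has_bochner_integral lborel (\<lambda>x. ?g x * x^0) (?m * 1)"
    using gauss_mom_even[OF tp, of 0] by simp
  have m2: "has_bochner_integral lborel (\<lambda>x. ?g x * x^2) (?m * \<tau>\<^sup>2)"
    using gauss_mom_even[OF tp, of 1] by (simp add: power2_eq_square)
  define K where "K = (N\<^sup>2) powr s"
  have K0: "0 \<le> K" unfolding K_def by simp
  have H: "has_bochner_integral lborel (\<lambda>\<eta>. (14*K) * (?g \<eta> * \<eta>^0) + (8*K/\<sigma>\<^sup>2) * (?g \<eta> * \<eta>^2))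
         ((14*K) * (?m * 1) + (8*K/\<sigma>\<^sup>2) * (?m * \<tau>\<^sup>2))"
    by (intro has_bochner_integral_add has_bochner_integral_mult_right m0 m2)
  have val: "(14*K) * (?m * 1) + (8*K/\<sigma>\<^sup>2) * (?m * \<tau>\<^sup>2) = 18 * \<sigma> * sqrt pi * K"
    unfolding m using sp t2 by (simp add: field_simps)
  have pt: "(1 + (\<eta>-N)\<^sup>2) powr s * ?g \<eta> \<le> (14*K) * (?g \<eta> * \<eta>^0) + (8*K/\<sigma>\<^sup>2) * (?g \<eta> * \<eta>^2)" for \<eta>
  proof -
    have a: "1 + (\<eta>-N)\<^sup>2 \<le> 2 * max (3*N\<^sup>2) (2*\<eta>\<^sup>2)"
    proof -
      have "(\<eta>-N)\<^sup>2 = 2*\<eta>\<^sup>2 + 2*N\<^sup>2 - (\<eta>+N)\<^sup>2" by (simp add: power2_eq_square algebra_simps)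
      moreover have "0 \<le> (\<eta>+N)\<^sup>2" by simp
      ultimately have "(\<eta>-N)\<^sup>2 \<le> 2*\<eta>\<^sup>2 + 2*N\<^sup>2" by linarith
      moreover have "1 \<le> N\<^sup>2" using N1 by (simp add: one_le_power)
      ultimately show ?thesis by linarith
    qed
    have "(1 + (\<eta>-N)\<^sup>2) powr s \<le> (2 * max (3*N\<^sup>2) (2*\<eta>\<^sup>2)) powr s"
      using a s0 by (intro powr_mono2) auto
    also have "\<dots> = 2 powr s * max (3*N\<^sup>2) (2*\<eta>\<^sup>2) powr s" by (simp add: powr_mult)
    also have "\<dots> \<le> 2 * ((3*N\<^sup>2) powr s + (2*\<eta>\<^sup>2) powr s)"
    proof (intro mult_mono)
      show "2 powr s \<le> (2::real)" using s1 powr_mono[of s 1 2] by simp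
      show "max (3*N\<^sup>2) (2*\<eta>\<^sup>2) powr s \<le> (3*N\<^sup>2) powr s + (2*\<eta>\<^sup>2) powr s"
        by (cases "3*N\<^sup>2 \<le> 2*\<eta>\<^sup>2") (auto simp: max_def)
    qed auto
    also have "(3*N\<^sup>2) powr s \<le> 3 * K"
    proof -
      have "(3*N\<^sup>2) powr s = 3 powr s * K" unfolding K_def by (simp add: powr_mult)
      moreover have "3 powr s \<le> (3::real)" using s1 powr_mono[of s 1 3] by simp
      ultimately show ?thesis using K0 by (simp add: mult_right_mono)
    qed
    also have "(2*\<eta>\<^sup>2) powr s \<le> 4 * K * (1 + \<eta>\<^sup>2/\<sigma>\<^sup>2)"
    proof -
      have "(2*\<eta>\<^sup>2) powr s = (2*\<sigma>\<^sup>2) powr s * (\<eta>\<^sup>2/\<sigma>\<^sup>2) powr s"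
        using sp by (simp add: powr_mult[symmetric])
      also have "\<dots> \<le> (4 * K) * (1 + \<eta>\<^sup>2/\<sigma>\<^sup>2)"
      proof (intro mult_mono)
        have "(2*\<sigma>\<^sup>2) powr s \<le> (4*N\<^sup>2) powr s" using sN s0 by (intro powr_mono2) auto
        also have "\<dots> = 4 powr s * K" unfolding K_def by (simp add: powr_mult)
        also have "\<dots> \<le> 4 * K" using s1 powr_mono[of s 1 4] K0 by (simp add: mult_right_mono)
        finally show "(2*\<sigma>\<^sup>2) powr s \<le> 4 * K" .
        show "(\<eta>\<^sup>2/\<sigma>\<^sup>2) powr s \<le> 1 + \<eta>\<^sup>2/\<sigma>\<^sup>2" using s0 s1 by (intro powr_le_1plus) auto
      qed (use K0 in auto)
      finally show ?thesis by simp
    qed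
    finally have "(1 + (\<eta>-N)\<^sup>2) powr s \<le> 14*K + (8*K/\<sigma>\<^sup>2) * \<eta>\<^sup>2"
      using sp by (simp add: field_simps)
    then have "(1 + (\<eta>-N)\<^sup>2) powr s * ?g \<eta> \<le> (14*K + (8*K/\<sigma>\<^sup>2) * \<eta>\<^sup>2) * ?g \<eta>"
      by (intro mult_right_mono) auto
    then show ?thesis by (simp add: algebra_simps)
  qed
  have "(\<integral>\<xi>. (1 + \<xi>\<^sup>2) powr s * (cmod (fourier (gw \<sigma> N) \<xi>))\<^sup>2 \<partial>lborel)
      = (\<integral>\<eta>. (1 + (\<eta>-N)\<^sup>2) powr s * ?g \<eta> \<partial>lborel)"
    unfolding J_shift[OF sp] \<tau>_def ..
  also have "\<dots> \<le> (\<integral>\<eta>. (14*K) * (?g \<eta> * \<eta>^0) + (8*K/\<sigma>\<^sup>2) * (?g \<eta> * \<eta>^2) \<partial>lborel)"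
  proof (rule integral_mono')
    show "integrable lborel (\<lambda>\<eta>. (14*K) * (?g \<eta> * \<eta>^0) + (8*K/\<sigma>\<^sup>2) * (?g \<eta> * \<eta>^2))"
      using H by (simp add: has_bochner_integral_iff)
    show "\<And>x. x \<in> space lborel \<Longrightarrow> 0 \<le> (14*K) * (?g x * x^0) + (8*K/\<sigma>\<^sup>2) * (?g x * x^2)"
      using K0 by (intro add_nonneg_nonneg mult_nonneg_nonneg) auto
  qed (rule pt)
  also have "\<dots> = 18 * \<sigma> * sqrt pi * K" using H val by (simp add: has_bochner_integral_iff)
  finally show ?thesis unfolding K_def .
qed

lemma J_bound_neg:
  fixes N s s' :: real assumes ss: "s \<le> s'" and s1: "-1 \<le> s'" and s0: "s' \<le> 0"
  shows "(\<integral>\<xi>. (1 + \<xi>\<^sup>2) powr s * (cmod (fourier (gw 1 N) \<xi>))\<^sup>2 \<partial>lborel)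
       \<le> 3 * sqrt pi * (1 + N\<^sup>2) powr s'"
proof -
  define \<tau> where "\<tau> = 1 / sqrt (2::real)"
  have tp: "0 < \<tau>" unfolding \<tau>_def by simp
  have t2: "\<tau>\<^sup>2 = 1/2" unfolding \<tau>_def by (simp add: power_divide)
  let ?g = "\<lambda>\<eta>::real. exp (-\<eta>\<^sup>2/(2*\<tau>\<^sup>2))"
  let ?m = "sqrt(2*pi*\<tau>\<^sup>2)"
  have m: "?m = sqrt pi" unfolding t2 by simp
  have m0: "has_bochner_integral lborel (\<lambda>x. ?g x * x^0) (?m * 1)"
    using gauss_mom_even[OF tp, of 0] by simp
  have m2: "has_bochner_integral lborel (\<lambda>x. ?g x * x^2) (?m * \<tau>\<^sup>2)"
    using gauss_mom_even[OF tp, of 1] by (simp add: power2_eq_square)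
  define K where "K = (1 + N\<^sup>2) powr s'"
  have K0: "0 \<le> K" unfolding K_def by simp
  have H: "has_bochner_integral lborel (\<lambda>\<eta>. (2*K) * (?g \<eta> * \<eta>^0) + (2*K) * (?g \<eta> * \<eta>^2))
         ((2*K) * (?m * 1) + (2*K) * (?m * \<tau>\<^sup>2))"
    by (intro has_bochner_integral_add has_bochner_integral_mult_right m0 m2)
  have val: "(2*K) * (?m * 1) + (2*K) * (?m * \<tau>\<^sup>2) = 3 * sqrt pi * K"
    unfolding m using t2 by (simp add: field_simps)
  have pt: "(1 + (\<eta>-N)\<^sup>2) powr s * ?g \<eta> \<le> (2*K) * (?g \<eta> * \<eta>^0) + (2*K) * (?g \<eta> * \<eta>^2)" for \<eta>
  proof -
    define A where "A = 1 + (\<eta>-N)\<^sup>2"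
    define B where "B = 1 + \<eta>\<^sup>2"
    have A1: "1 \<le> A" and B1: "1 \<le> B" unfolding A_def B_def by auto
    have peetre: "1 + N\<^sup>2 \<le> 2 * A * B"
    proof -
      have "N\<^sup>2 = 2*\<eta>\<^sup>2 + 2*(\<eta>-N)\<^sup>2 - (2*\<eta> - N)\<^sup>2" by (simp add: power2_eq_square algebra_simps)
      moreover have "0 \<le> (2*\<eta> - N)\<^sup>2" by simp
      moreover have "0 \<le> \<eta>\<^sup>2 * (\<eta>-N)\<^sup>2" by simp
      moreover have "2 * A * B = 2 + 2*\<eta>\<^sup>2 + 2*(\<eta>-N)\<^sup>2 + 2*(\<eta>\<^sup>2 * (\<eta>-N)\<^sup>2)"
        unfolding A_def B_def by (simp add: algebra_simps)
      ultimately show ?thesis by linarith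
    qed
    have "A powr s \<le> A powr s'" using A1 ss by (intro powr_mono) auto
    also have "A powr s' = (2 * A * B) powr s' * (2 powr (-s') * B powr (-s'))"
      using A1 B1 by (simp add: powr_mult powr_minus field_simps)
    also have "\<dots> \<le> K * (2 * B)"
    proof (rule mult_mono)
      show "(2 * A * B) powr s' \<le> K" unfolding K_def
        using peetre s0 by (intro powr_mono2') (auto intro: add_pos_nonneg)
      have h1: "2 powr (-s') \<le> (2::real)" using s1 powr_mono[of "-s'" 1 2] by simp
      have h2: "B powr (-s') \<le> B" using s1 B1 powr_mono[of "-s'" 1 B] by simp
      show "2 powr (-s') * B powr (-s') \<le> 2 * B"
        using mult_mono[OF h1 h2] by simp
    qed (use K0 B1 in auto)
    finally have "A powr s \<le> 2*K + 2*K*\<eta>\<^sup>2" unfolding B_def by (simp add: algebra_simps)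
    then have "A powr s * ?g \<eta> \<le> (2*K + 2*K*\<eta>\<^sup>2) * ?g \<eta>"
      by (intro mult_right_mono) auto
    then show ?thesis unfolding A_def by (simp add: algebra_simps)
  qed
  have "(\<integral>\<xi>. (1 + \<xi>\<^sup>2) powr s * (cmod (fourier (gw 1 N) \<xi>))\<^sup>2 \<partial>lborel)
      = (\<integral>\<eta>. (1 + (\<eta>-N)\<^sup>2) powr s * ?g \<eta> \<partial>lborel)"
    unfolding J_shift[OF zero_less_one] \<tau>_def ..
  also have "\<dots> \<le> (\<integral>\<eta>. (2*K) * (?g \<eta> * \<eta>^0) + (2*K) * (?g \<eta> * \<eta>^2) \<partial>lborel)"
  proof (rule integral_mono')
    show "integrable lborel (\<lambda>\<eta>. (2*K) * (?g \<eta> * \<eta>^0) + (2*K) * (?g \<eta> * \<eta>^2))"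
      using H by (simp add: has_bochner_integral_iff)
    show "\<And>x. x \<in> space lborel \<Longrightarrow> 0 \<le> (2*K) * (?g x * x^0) + (2*K) * (?g x * x^2)"
      using K0 by (intro add_nonneg_nonneg mult_nonneg_nonneg) auto
  qed (rule pt)
  also have "\<dots> = 3 * sqrt pi * K" using H val by (simp add: has_bochner_integral_iff)
  finally show ?thesis unfolding K_def .
qed




lemma schwartz_gw: fixes \<sigma> N :: real assumes "0 < \<sigma>" shows "schwartz (gw \<sigma> N)"
proof -
  have "gw \<sigma> N = (\<lambda>x. complex_of_real (\<sigma> / sqrt(2*pi)) * Phi (\<sigma>\<^sup>2/2) (-N) (of_real x))"
  proof
    fix x
    have "complex_of_real (exp(-(\<sigma>\<^sup>2*x\<^sup>2)/2)) * exp(-\<i> * complex_of_real (N*x))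
        = exp (complex_of_real (-(\<sigma>\<^sup>2*x\<^sup>2)/2) + (-\<i> * complex_of_real (N*x)))"
      by (simp only: exp_of_real[symmetric] exp_add)
    also have "\<dots> = Phi (\<sigma>\<^sup>2/2) (-N) (of_real x)"
      unfolding Phi_def by (simp add: algebra_simps)
    finally show "gw \<sigma> N x = complex_of_real (\<sigma> / sqrt(2*pi)) * Phi (\<sigma>\<^sup>2/2) (-N) (of_real x)"
      unfolding gw_def by (simp add: mult.assoc)
  qed
  moreover have "schwartz (\<lambda>x. complex_of_real (\<sigma> / sqrt(2*pi)) * Phi (\<sigma>\<^sup>2/2) (-N) (of_real x))"
    by (rule schwartz_gauss) (use assms in simp)
  ultimately show ?thesis by simp
qed

lemma neg_case:
  fixes \<gamma> \<alpha> s C :: real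
  assumes hyp: "\<forall>f. schwartz f \<longrightarrow> maximal_L2 \<gamma> \<alpha> f \<le> ennreal (C * Hs_norm s f)"
  shows "0 \<le> s"
proof (rule ccontr)
  assume "\<not> 0 \<le> s"
  then have sneg: "s < 0" by simp
  define s' where "s' = max s (-1)"
  have s'neg: "s' < 0" and ss: "s \<le> s'" and s'1: "-1 \<le> s'" using sneg unfolding s'_def by auto
  define B where "B = sqrt (2*pi) / (4*pi)"
  have B0: "0 < B" unfolding B_def by simp
  have bound: "2 * B\<^sup>2 \<le> C\<^sup>2 * (3 * sqrt pi * (1 + N\<^sup>2) powr s')" for N :: real
  proof -
    have h: "maximal_L2 \<gamma> \<alpha> (gw 1 N) \<le> ennreal (C * Hs_norm s (gw 1 N))"
      using hyp schwartz_gw[of 1 N] by simp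
    have "(1 - (-1))*B\<^sup>2 \<le> C\<^sup>2 * (\<integral>\<xi>. (1 + \<xi>\<^sup>2) powr s * (cmod (fourier (gw 1 N) \<xi>))\<^sup>2 \<partial>lborel)"
    proof (rule lhs_bound[OF h])
      fix x :: real assume x: "x \<in> {-1..1}"
      have "sqrt(2*pi*1\<^sup>2) * (1 - ((x - 0 powr \<alpha>) - 2*0*N)\<^sup>2*1\<^sup>2/2 - 3/2*0\<^sup>2*1^4 - (0 powr \<gamma>)*(1\<^sup>2+N\<^sup>2))
         \<le> 2*pi*cmod (P_op \<gamma> (gw 1 N) (x - 0 powr \<alpha>) 0)"
        by (rule P_lower) auto
      then have 1: "sqrt(2*pi) * (1 - x\<^sup>2/2) \<le> 2*pi*cmod (P_op \<gamma> (gw 1 N) (x - 0 powr \<alpha>) 0)" by simp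
      have "x\<^sup>2 \<le> 1" using x by (auto simp: abs_square_le_1 abs_le_iff)
      then have "sqrt(2*pi) * (1/2) \<le> sqrt(2*pi) * (1 - x\<^sup>2/2)" by (intro mult_left_mono) auto
      with 1 have "sqrt(2*pi) * (1/2) \<le> 2*pi*cmod (P_op \<gamma> (gw 1 N) (x - 0 powr \<alpha>) 0)" by linarith
      then have "B \<le> cmod (P_op \<gamma> (gw 1 N) (x - 0 powr \<alpha>) 0)" unfolding B_def
        by (simp add: field_simps)
      then show "\<exists>t\<in>{0..1}. B \<le> cmod (P_op \<gamma> (gw 1 N) (x - t powr \<alpha>) t)" by force
    qed (use B0 in auto)
    also have "\<dots> \<le> C\<^sup>2 * (3 * sqrt pi * (1 + N\<^sup>2) powr s')"
      by (intro mult_left_mono J_bound_neg ss s'1) (use s'neg in auto)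
    finally show ?thesis by simp
  qed
  have lim: "((\<lambda>N::real. C\<^sup>2 * (3 * sqrt pi * (1 + N\<^sup>2) powr s')) \<longlongrightarrow> C\<^sup>2 * (3 * sqrt pi * 0)) at_top"
  proof (intro tendsto_mult tendsto_const tendsto_neg_powr[OF s'neg])
    show "filterlim (\<lambda>N::real. 1 + N\<^sup>2) at_top at_top"
      by real_asymp
  qed
  then have "eventually (\<lambda>N::real. C\<^sup>2 * (3 * sqrt pi * (1 + N\<^sup>2) powr s') < 2 * B\<^sup>2) at_top"
    using B0 by (intro order_tendstoD(2)) auto
  then obtain N :: real where "C\<^sup>2 * (3 * sqrt pi * (1 + N\<^sup>2) powr s') < 2 * B\<^sup>2"
    using eventually_happens' by (metis eventually_at_top_linorder order_refl)
  with bound[of N] show False by linarith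
qed




lemma main_case:
  fixes \<gamma> \<alpha> s C N t0 \<sigma> :: real
  assumes hyp: "\<forall>f. schwartz f \<longrightarrow> maximal_L2 \<gamma> \<alpha> f \<le> ennreal (C * Hs_norm s f)"
    and \<gamma>1: "1 \<le> \<gamma>" and \<alpha>p: "0 < \<alpha>" and s0: "0 \<le> s" and s1: "s \<le> 1" and N1: "1 \<le> N"
    and t0p: "0 < t0" and t01: "t0 \<le> 1" and tg: "t0 powr \<gamma> * N\<^sup>2 \<le> 1/4" and tN: "2*N*t0 \<le> 1"
    and sig: "\<sigma> = 1/(2 * sqrt t0)" and sN: "\<sigma>\<^sup>2 \<le> 2*N\<^sup>2"
  shows "N/(64*pi) \<le> C\<^sup>2 * (18*\<sigma>* sqrt pi*(N\<^sup>2) powr s)"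
proof -
  have sp: "0 < \<sigma>" unfolding sig using t0p by simp
  have s2: "\<sigma>\<^sup>2 = 1/(4*t0)" unfolding sig using t0p by (simp add: power_divide power_mult_distrib)
  define B where "B = \<sigma> * sqrt(2*pi) / (8*pi)"
  have B0: "0 < B" unfolding B_def using sp by simp
  have h: "maximal_L2 \<gamma> \<alpha> (gw \<sigma> N) \<le> ennreal (C * Hs_norm s (gw \<sigma> N))"
    using hyp schwartz_gw[OF sp] by simp
  have t0g: "t0 powr \<gamma> \<le> t0"
    using powr_mono'[of 1 \<gamma> t0] \<gamma>1 t0p t01 by simp
  have "(2*N*t0 - 0)*B\<^sup>2 \<le> C\<^sup>2 * (\<integral>\<xi>. (1 + \<xi>\<^sup>2) powr s * (cmod (fourier (gw \<sigma> N) \<xi>))\<^sup>2 \<partial>lborel)"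
  proof (rule lhs_bound[OF h])
    fix x :: real assume x: "x \<in> {0..2*N*t0}"
    let ?h = "\<lambda>t::real. t powr \<alpha> + 2*N*t"
    have cont: "continuous_on {0..t0} ?h"
      using \<alpha>p by (intro continuous_intros continuous_on_powr') auto
    have "?h 0 \<le> x" using x by simp
    moreover have "x \<le> ?h t0" proof - have "0 \<le> t0 powr \<alpha>" by simp moreover have "x \<le> 2*N*t0" using x by simp ultimately show ?thesis by linarith qed
    ultimately obtain t where t: "0 \<le> t" "t \<le> t0" "?h t = x"
      using IVT'[of ?h 0 x t0, OF _ _ _ cont] t0p by auto
    let ?T = "t powr \<gamma>"
    have T0: "0 \<le> ?T" by simp
    have Tt0: "?T \<le> t0 powr \<gamma>" using t \<gamma>1 by (intro powr_mono2) auto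
    have L0: "(x - t powr \<alpha>) - 2*t*N = 0" using t(3) by (simp add: algebra_simps)
    have "sqrt(2*pi*\<sigma>\<^sup>2) * (1 - ((x - t powr \<alpha>) - 2*t*N)\<^sup>2*\<sigma>\<^sup>2/2 - 3/2*t\<^sup>2*\<sigma>^4 - ?T*(\<sigma>\<^sup>2+N\<^sup>2))
         \<le> 2*pi*cmod (P_op \<gamma> (gw \<sigma> N) (x - t powr \<alpha>) t)"
      by (rule P_lower[OF sp t(1)])
    then have P1: "sqrt(2*pi*\<sigma>\<^sup>2) * (1 - 3/2*t\<^sup>2*\<sigma>^4 - ?T*\<sigma>\<^sup>2 - ?T*N\<^sup>2)
         \<le> 2*pi*cmod (P_op \<gamma> (gw \<sigma> N) (x - t powr \<alpha>) t)"
      unfolding L0 by (simp add: algebra_simps)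
    have a1: "t\<^sup>2*\<sigma>^4 \<le> 1/16"
    proof -
      have "\<sigma>^4 = (\<sigma>\<^sup>2)\<^sup>2" by simp
      then have "\<sigma>^4 = 1/(16*t0\<^sup>2)" unfolding s2 by (simp add: power_divide power_mult_distrib)
      moreover have "t\<^sup>2 \<le> t0\<^sup>2" using t by (intro power_mono) auto
      moreover have "0 \<le> \<sigma>^4" by simp
      ultimately have "t\<^sup>2*\<sigma>^4 \<le> t0\<^sup>2 * \<sigma>^4" by (intro mult_right_mono) auto
      also have "t0\<^sup>2 * \<sigma>^4 = 1/16" using \<open>\<sigma>^4 = 1/(16*t0\<^sup>2)\<close> t0p by simp
      finally show ?thesis .
    qed
    have a2: "?T*\<sigma>\<^sup>2 \<le> 1/4"
    proof -
      have "?T*\<sigma>\<^sup>2 \<le> t0 * \<sigma>\<^sup>2" using Tt0 t0g by (intro mult_right_mono) auto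
      also have "\<dots> = 1/4" unfolding s2 using t0p by simp
      finally show ?thesis .
    qed
    have a3: "?T*N\<^sup>2 \<le> 1/4"
    proof -
      have "?T*N\<^sup>2 \<le> t0 powr \<gamma> * N\<^sup>2" using Tt0 by (intro mult_right_mono) auto
      then show ?thesis using tg by simp
    qed
    have "1/4 \<le> 1 - 3/2*t\<^sup>2*\<sigma>^4 - ?T*\<sigma>\<^sup>2 - ?T*N\<^sup>2" using a1 a2 a3 by simp
    then have "sqrt(2*pi*\<sigma>\<^sup>2) * (1/4) \<le> sqrt(2*pi*\<sigma>\<^sup>2) * (1 - 3/2*t\<^sup>2*\<sigma>^4 - ?T*\<sigma>\<^sup>2 - ?T*N\<^sup>2)"
      by (intro mult_left_mono) auto
    with P1 have "sqrt(2*pi*\<sigma>\<^sup>2) * (1/4) \<le> 2*pi*cmod (P_op \<gamma> (gw \<sigma> N) (x - t powr \<alpha>) t)" by linarith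
    moreover have "sqrt(2*pi*\<sigma>\<^sup>2) = \<sigma> * sqrt(2*pi)" using sp by (simp add: real_sqrt_mult)
    ultimately have "B \<le> cmod (P_op \<gamma> (gw \<sigma> N) (x - t powr \<alpha>) t)" unfolding B_def
      by (simp add: field_simps)
    moreover have "t \<in> {0..1}" using t t01 by auto
    ultimately show "\<exists>t\<in>{0..1}. B \<le> cmod (P_op \<gamma> (gw \<sigma> N) (x - t powr \<alpha>) t)" by blast
  qed (use B0 t0p N1 tN in auto)
  also have "\<dots> \<le> C\<^sup>2 * (18*\<sigma>* sqrt pi*(N\<^sup>2) powr s)"
    by (intro mult_left_mono J_bound_pos sp N1 sN s0 s1) auto
  finally have *: "(2*N*t0 - 0)*B\<^sup>2 \<le> C\<^sup>2 * (18*\<sigma>* sqrt pi*(N\<^sup>2) powr s)" .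
  have "(2*N*t0 - 0)*B\<^sup>2 = 2*N*t0 * \<sigma>\<^sup>2 * (2*pi) / (64*pi\<^sup>2)"
    unfolding B_def by (simp add: power_mult_distrib power_divide)
  also have "\<dots> = N/(64*pi)" unfolding s2 using t0p by (simp add: field_simps power2_eq_square)
  finally show ?thesis using * by simp
qed




lemma powr_contra:
  fixes K e :: real
  assumes H: "\<And>N. 1 \<le> N \<Longrightarrow> N \<le> K * N powr e" and e1: "e < 1"
  shows False
proof -
  have "filterlim (\<lambda>x::real. x powr (1 - e)) at_top at_top"
    using e1 by (intro real_powr_at_top) simp
  then have e1: "eventually (\<lambda>x::real. K + 1 \<le> x powr (1 - e)) at_top"
    by (simp add: filterlim_at_top)
  have e2: "eventually (\<lambda>x::real. 1 \<le> x) at_top" by (rule eventually_ge_at_top)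
  have "eventually (\<lambda>x::real. K + 1 \<le> x powr (1 - e) \<and> 1 \<le> x) at_top"
    using e1 e2 by (rule eventually_conj)
  then obtain N0 :: real where N0: "\<forall>n\<ge>N0. K + 1 \<le> n powr (1 - e) \<and> 1 \<le> n"
    unfolding eventually_at_top_linorder by blast
  define N where "N = N0"
  have N: "N powr (1 - e) > K" "N \<ge> 1" using N0 unfolding N_def by auto
  have "N \<le> K * N powr e" using H N(2) .
  then have "N / N powr e \<le> K" using N(2) by (simp add: divide_le_eq)
  moreover have "N / N powr e = N powr (1 - e)" using N(2) by (simp add: powr_diff)
  ultimately show False using N(1) by simp
qed

lemma sq_powr: fixes N s :: real assumes "0 \<le> N" shows "(N\<^sup>2) powr s = N powr (2 * s)"
proof -
  have "N powr 2 = N\<^sup>2" using assms by (rule powr_numeral)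
  then have "(N\<^sup>2) powr s = (N powr 2) powr s" by simp
  also have "\<dots> = N powr (2 * s)" by (simp add: powr_powr)
  finally show ?thesis .
qed

lemma caseA:
  fixes \<gamma> \<alpha> s C :: real
  assumes hyp: "\<forall>f. schwartz f \<longrightarrow> maximal_L2 \<gamma> \<alpha> f \<le> ennreal (C * Hs_norm s f)"
    and \<gamma>1: "1 \<le> \<gamma>" and \<gamma>2: "\<gamma> \<le> 2" and \<alpha>p: "0 < \<alpha>" and s0: "0 \<le> s" and s1: "s \<le> 1"
  shows "(1 - 1/\<gamma>)/2 \<le> s"
proof (rule ccontr)
  assume "\<not> (1 - 1/\<gamma>)/2 \<le> s"
  then have lt: "1/\<gamma> + 2 * s < 1" by simp
  have g2: "2/\<gamma> \<le> 2" using \<gamma>1 by (simp add: field_simps)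
  define K where "K = 64*pi*(C\<^sup>2 * (18 * sqrt pi))"
  show False
  proof (rule powr_contra[OF _ lt])
    fix N :: real assume N1: "1 \<le> N"
    define M where "M = 2*N"
    have M1: "1 \<le> M" "0 < M" using N1 unfolding M_def by auto
    define t0 where "t0 = M powr (-2/\<gamma>)"
    define \<sigma> where "\<sigma> = 1/(2 * sqrt t0)"
    have t0p: "0 < t0" unfolding t0_def using M1 by simp
    have t01: "t0 \<le> 1"
    proof -
      have "t0 \<le> M powr 0" unfolding t0_def using M1 \<gamma>1 by (intro powr_mono) auto
      then show ?thesis using M1 by simp
    qed
    have tg: "t0 powr \<gamma> * N\<^sup>2 \<le> 1/4"
    proof -
      have "t0 powr \<gamma> = M powr (-2)" unfolding t0_def using \<gamma>1 by (simp add: powr_powr)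
      also have "\<dots> = 1 / M\<^sup>2" using M1 by (simp add: powr_minus powr_realpow divide_inverse)
      finally show ?thesis unfolding M_def using N1 by (simp add: power_mult_distrib)
    qed
    have tN: "2*N*t0 \<le> 1"
    proof -
      have "2*N*t0 = M powr 1 * M powr (-2/\<gamma>)" unfolding t0_def M_def using N1 by simp
      also have "\<dots> = M powr (1 + -2/\<gamma>)" by (rule powr_add[symmetric])
      also have "\<dots> = M powr (1 - 2/\<gamma>)" by simp
      also have "\<dots> \<le> M powr 0" using M1 \<gamma>1 \<gamma>2 by (intro powr_mono) (auto simp: field_simps)
      finally show ?thesis using M1 by simp
    qed
    have inv_t0: "1 / t0 = M powr (2/\<gamma>)" unfolding t0_def by (simp add: powr_minus divide_inverse)
    have s2: "\<sigma>\<^sup>2 = M powr (2/\<gamma>) / 4"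
      unfolding \<sigma>_def using t0p inv_t0 by (simp add: power_divide power_mult_distrib)
    have Mp: "M powr (2/\<gamma>) \<le> 4 * N powr (2/\<gamma>)"
    proof -
      have "M powr (2/\<gamma>) = 2 powr (2/\<gamma>) * N powr (2/\<gamma>)" unfolding M_def using N1 by (simp add: powr_mult)
      moreover have "2 powr (2/\<gamma>) \<le> (2::real) powr 2" using g2 by (intro powr_mono) auto
      ultimately show ?thesis by (simp add: mult_right_mono)
    qed
    have sN: "\<sigma>\<^sup>2 \<le> 2*N\<^sup>2"
    proof -
      have "N powr (2/\<gamma>) \<le> N powr 2" using N1 g2 by (intro powr_mono) auto
      then have "N powr (2/\<gamma>) \<le> N\<^sup>2" using N1 by (simp add: powr_realpow)
      moreover have "0 \<le> N\<^sup>2" by simp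
      ultimately show ?thesis unfolding s2 using Mp by linarith
    qed
    have sig_le: "\<sigma> \<le> N powr (1/\<gamma>)"
    proof -
      have "\<sigma>\<^sup>2 \<le> N powr (2/\<gamma>)" unfolding s2 using Mp by simp
      also have "N powr (2/\<gamma>) = (N powr (1/\<gamma>))\<^sup>2"
      proof -
        have "N powr (1/\<gamma> + 1/\<gamma>) = N powr (1/\<gamma>) * N powr (1/\<gamma>)" by (rule powr_add)
        then have "(N powr (1/\<gamma>))\<^sup>2 = N powr (1/\<gamma> + 1/\<gamma>)" by (simp only: power2_eq_square)
        moreover have "1/\<gamma> + 1/\<gamma> = 2/\<gamma>" by simp
        ultimately show ?thesis by simp
      qed
      finally show ?thesis by (rule power2_le_imp_le) simp
    qed
    have main: "N/(64*pi) \<le> C\<^sup>2 * (18*\<sigma>* sqrt pi*(N\<^sup>2) powr s)"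
      by (rule main_case[OF hyp \<gamma>1 \<alpha>p s0 s1 N1 t0p t01 tg tN \<sigma>_def sN])
    have Np: "(N\<^sup>2) powr s = N powr (2 * s)" using N1 by (intro sq_powr) simp
    have "C\<^sup>2 * (18*\<sigma>* sqrt pi*(N\<^sup>2) powr s) \<le> C\<^sup>2 * (18*(N powr (1/\<gamma>))* sqrt pi*(N powr (2 * s)))"
      unfolding Np using sig_le by (intro mult_left_mono mult_right_mono) auto
    also have "\<dots> = C\<^sup>2 * (18 * sqrt pi) * N powr (1/\<gamma> + 2 * s)"
      by (simp add: powr_add)
    finally have "N/(64*pi) \<le> C\<^sup>2 * (18 * sqrt pi) * N powr (1/\<gamma> + 2 * s)" using main by linarith
    then have "64*pi*(N/(64*pi)) \<le> 64*pi*(C\<^sup>2 * (18 * sqrt pi) * N powr (1/\<gamma> + 2 * s))"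
      by (intro mult_left_mono) auto
    then show "N \<le> K * N powr (1/\<gamma> + 2 * s)" unfolding K_def by (simp add: mult.assoc)
  qed
qed

lemma caseB:
  fixes \<gamma> \<alpha> s C :: real
  assumes hyp: "\<forall>f. schwartz f \<longrightarrow> maximal_L2 \<gamma> \<alpha> f \<le> ennreal (C * Hs_norm s f)"
    and \<gamma>2: "2 \<le> \<gamma>" and \<alpha>p: "0 < \<alpha>" and s0: "0 \<le> s" and s1: "s \<le> 1"
  shows "1/4 \<le> s"
proof (rule ccontr)
  assume "\<not> 1/4 \<le> s"
  then have lt: "1/2 + 2 * s < 1" by simp
  have \<gamma>1: "1 \<le> \<gamma>" using \<gamma>2 by simp
  define K where "K = 64*pi*(C\<^sup>2 * (18 * sqrt pi))"
  show False
  proof (rule powr_contra[OF _ lt])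
    fix N :: real assume N1: "1 \<le> N"
    define t0 where "t0 = 1/(4*N)"
    define \<sigma> where "\<sigma> = 1/(2 * sqrt t0)"
    have t0p: "0 < t0" unfolding t0_def using N1 by simp
    have t01: "t0 \<le> 1" unfolding t0_def using N1 by simp
    have tg: "t0 powr \<gamma> * N\<^sup>2 \<le> 1/4"
    proof -
      have "t0 powr \<gamma> \<le> t0 powr 2" using powr_mono'[of 2 \<gamma> t0] \<gamma>2 t0p t01 by simp
      also have "\<dots> = t0\<^sup>2" using t0p by (simp add: powr_realpow)
      finally have "t0 powr \<gamma> * N\<^sup>2 \<le> t0\<^sup>2 * N\<^sup>2" by (intro mult_right_mono) auto
      also have "\<dots> = 1/16" unfolding t0_def using N1 by (simp add: power_divide power_mult_distrib)
      finally show ?thesis by simp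
    qed
    have tN: "2*N*t0 \<le> 1" unfolding t0_def using N1 by simp
    have s2: "\<sigma>\<^sup>2 = N" unfolding \<sigma>_def t0_def using N1
      by (simp add: power_divide power_mult_distrib real_sqrt_divide)
    have sN: "\<sigma>\<^sup>2 \<le> 2*N\<^sup>2" unfolding s2 using N1 by (simp add: power2_eq_square)
    have sig: "\<sigma> = N powr (1/2)"
    proof -
      have "\<sigma> \<ge> 0" unfolding \<sigma>_def using t0p by simp
      then have "\<sigma> = sqrt N" using s2 by (metis real_sqrt_unique)
      then show ?thesis using N1 by (simp add: powr_half_sqrt)
    qed
    have main: "N/(64*pi) \<le> C\<^sup>2 * (18*\<sigma>* sqrt pi*(N\<^sup>2) powr s)"
      by (rule main_case[OF hyp \<gamma>1 \<alpha>p s0 s1 N1 t0p t01 tg tN \<sigma>_def sN])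
    have Np: "(N\<^sup>2) powr s = N powr (2 * s)" using N1 by (intro sq_powr) simp
    have "C\<^sup>2 * (18*\<sigma>* sqrt pi*(N\<^sup>2) powr s) = C\<^sup>2 * (18 * sqrt pi) * N powr (1/2 + 2 * s)"
      unfolding Np sig by (simp add: powr_add)
    then have "N/(64*pi) \<le> C\<^sup>2 * (18 * sqrt pi) * N powr (1/2 + 2 * s)" using main by linarith
    then have "64*pi*(N/(64*pi)) \<le> 64*pi*(C\<^sup>2 * (18 * sqrt pi) * N powr (1/2 + 2 * s))"
      by (intro mult_left_mono) auto
    then show "N \<le> K * N powr (1/2 + 2 * s)" unfolding K_def by (simp add: mult.assoc)
  qed
qed

theorem theorem3p2:
  fixes \<gamma> \<alpha> s C :: real
  assumes "1 \<le> \<gamma>"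
    and "1/4 < \<alpha>" and "\<alpha> \<le> 1"
    and "\<forall>f. schwartz f \<longrightarrow> maximal_L2 \<gamma> \<alpha> f \<le> ennreal (C * Hs_norm s f)"
  shows "(max (1 / (2 * \<alpha>)) 1 \<le> \<gamma> \<and> \<gamma> < 2 \<longrightarrow> s \<ge> (1 - 1/\<gamma>) / 2)
       \<and> (2 \<le> \<gamma> \<longrightarrow> s \<ge> 1/4)"
proof -
  have s0: "0 \<le> s" by (rule neg_case[OF assms(4)])
  have \<alpha>p: "0 < \<alpha>" using assms(2) by simp
  show ?thesis
  proof (cases "s \<le> 1")
    case True
    have A: "\<gamma> < 2 \<Longrightarrow> (1 - 1/\<gamma>)/2 \<le> s"
      by (rule caseA[OF assms(4) assms(1) _ \<alpha>p s0 True]) simp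
    have B: "2 \<le> \<gamma> \<Longrightarrow> 1/4 \<le> s"
      by (rule caseB[OF assms(4) _ \<alpha>p s0 True])
    show ?thesis using A B by blast
  next
    case False
    have "(1 - 1/\<gamma>)/2 \<le> 1" using assms(1) by (simp add: field_simps)
    then show ?thesis using False by auto
  qed
qed


end
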